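(* Let $m$ be an even positive integer with prime factorization $m=\prod_{i=1}^{k}p_i^{b_i}$, and let $l(m)=\prod_{i=1}^{k}p_i^{\lfloor \log_{p_i} m\rfloor + b_i}$. Then for every integer $k'$, $$\binom{m+k'}{m}\equiv \binom{l(m)-1-k'}{m}\pmod{m}.$$
   Context: For any integer $a$ (possibly negative) and positive integer $m$, the binomial symbol is defined by $\binom{a}{m}=\frac{\prod_{i=0}^{m-1}(a-i)}{m!}$, which is an integer. $\lfloor x\rfloor$ denotes the greatest integer not exceeding $x$. *)

theory Defs
  imports "HOL-Computational_Algebra.Primes" "HOL-Number_Theory.Cong" Complex_Main
begin

text \<open>Binomial symbol for an arbitrary integer top: (prod_{i<m} (a - i)) / m!,
  which is an integer (the division is exact).\<close>
definition int_binom :: "int \<Rightarrow> nat \<Rightarrow> int" where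
  "int_binom a m = (\<Prod>i<m. a - int i) div fact m"

definition lfun :: "nat \<Rightarrow> nat" where
  "lfun m = (\<Prod>p\<in>prime_factors m.
      p ^ (nat \<lfloor>log (real p) (real m)\<rfloor> + multiplicity p m))"

end

theory Submission
  imports Defs
begin

lemma mult_bound:
  fixes p j m :: nat
  assumes "prime p" "0 < j" "j \<le> m"
  shows "multiplicity p j \<le> nat \<lfloor>log (real p) (real m)\<rfloor>"
proof -
  let ?t = "multiplicity p j"
  have "p ^ ?t dvd j" by (rule multiplicity_dvd)
  hence "p ^ ?t \<le> j" using assms by (simp add: dvd_imp_le)
  hence le: "real (p ^ ?t) \<le> real m" using assms by linarith
  have p1: "1 < real p" using assms prime_gt_1_nat by simp
  have "real ?t = log (real p) (real (p ^ ?t))"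
    using p1 by (simp add: log_nat_power)
  also have "\<dots> \<le> log (real p) (real m)"
    using le p1 assms by (subst log_le_cancel_iff) auto
  finally have "real ?t \<le> log (real p) (real m)" .
  hence "int ?t \<le> \<lfloor>log (real p) (real m)\<rfloor>" by (simp add: le_floor_iff)
  thus ?thesis by linarith
qed

lemma key_dvd:
  fixes m j :: nat
  assumes "m > 0" "0 < j" "j \<le> m"
  shows "m dvd (lfun m choose j)"
proof -
  define L where "L = lfun m"
  have Lpos: "L > 0" unfolding L_def lfun_def
    by (intro prod_pos) (auto intro: prime_gt_0_nat)
  define C where "C = L choose j"
  show ?thesis
  proof (cases "C = 0")
    case True thus ?thesis unfolding C_def L_def by (metis dvd_0_right)
  next
    case False
    have eq: "j * C = L * ((L - 1) choose (j - 1))"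
      unfolding C_def using assms times_binomial_minus1_eq by blast
    have "m dvd C"
    proof (rule multiplicity_le_imp_dvd)
      show "m \<noteq> 0" using assms by simp
    next
      fix p :: nat assume pp: "prime p"
      show "multiplicity p m \<le> multiplicity p C"
      proof (cases "p \<in> prime_factors m")
        case False
        hence "multiplicity p m = 0" using pp assms
          by (simp add: not_dvd_imp_multiplicity_0 prime_factors_dvd)
        thus ?thesis by simp
      next
        case True
        define e where "e = nat \<lfloor>log (real p) (real m)\<rfloor> + multiplicity p m"
        have "p ^ e dvd L" unfolding L_def lfun_def e_def
          using True by (intro dvd_prodI) auto
        hence "p ^ e dvd j * C" using eq by simp
        hence "e \<le> multiplicity p (j * C)"
          using False assms pp by (intro multiplicity_geI) auto
        also have "\<dots> = multiplicity p j + multiplicity p C"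
          using False assms pp by (intro prime_elem_multiplicity_mult_distrib) auto
        finally show ?thesis using mult_bound[OF pp assms(2,3)] unfolding e_def by linarith
      qed
    qed
    thus ?thesis by (simp add: C_def L_def)
  qed
qed

lemma ib_Suc: "int_binom (x + 1) (Suc k) = int_binom x k + int_binom x (Suc k)"
  using gbinomial_int_Suc_Suc[of x k] unfolding int_binom_def gbinomial_prod_rev atLeast0LessThan .

lemma ib_0 [simp]: "int_binom x 0 = 1"
  by (simp add: int_binom_def)

lemma ib_nat: "int (n choose k) = int_binom (int n) k"
  using int_binomial[of n k] unfolding int_binom_def gbinomial_prod_rev atLeast0LessThan .

lemma ib_zero: "int_binom 0 (Suc k) = 0"
  by (simp add: int_binom_def lessThan_Suc_eq_insert_0)

lemma ib_neg: "int_binom a k = (-1) ^ k * int_binom (int k - a - 1) k"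
  using gbinomial_int_negated_upper[of a k] unfolding int_binom_def gbinomial_prod_rev atLeast0LessThan .

lemma periodic:
  fixes m L :: nat and x :: int
  assumes "\<And>j. 0 < j \<Longrightarrow> j \<le> m \<Longrightarrow> m dvd (L choose j)"
  shows "\<forall>j\<le>m. int m dvd (int_binom (x + int L) j - int_binom x j)"
proof (induction x rule: int_induct[where k=0])
  case base
  show ?case
  proof (intro allI impI)
    fix j assume "j \<le> m"
    show "int m dvd (int_binom (0 + int L) j - int_binom 0 j)"
    proof (cases j)
      case 0 thus ?thesis by simp
    next
      case (Suc j')
      hence "m dvd (L choose j)" using assms \<open>j \<le> m\<close> by simp
      hence "int m dvd int (L choose j)" by simp
      thus ?thesis using Suc by (simp add: ib_nat ib_zero)
    qed
  qed
next
  case (step1 i)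
  show ?case
  proof (intro allI impI)
    fix j assume "j \<le> m"
    show "int m dvd (int_binom (i + 1 + int L) j - int_binom (i + 1) j)"
    proof (cases j)
      case 0 thus ?thesis by simp
    next
      case (Suc j')
      have e: "i + 1 + int L = (i + int L) + 1" by simp
      have "int_binom (i + 1 + int L) j - int_binom (i + 1) j
          = (int_binom (i + int L) j' - int_binom i j') + (int_binom (i + int L) j - int_binom i j)"
        unfolding e Suc ib_Suc by simp
      thus ?thesis using step1(2) Suc \<open>j \<le> m\<close> by simp
    qed
  qed
next
  case (step2 i)
  have "\<forall>j. j \<le> m \<longrightarrow> int m dvd (int_binom (i - 1 + int L) j - int_binom (i - 1) j)"
  proof (intro allI)
    fix j show "j \<le> m \<longrightarrow> int m dvd (int_binom (i - 1 + int L) j - int_binom (i - 1) j)"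
    proof (induction j)
      case 0 thus ?case by simp
    next
      case (Suc j')
      have e1: "i + int L = (i - 1 + int L) + 1" and e2: "i = (i - 1) + 1" by simp_all
      have "int_binom (i + int L) (Suc j') - int_binom i (Suc j')
          = (int_binom (i - 1 + int L) j' - int_binom (i - 1) j') + (int_binom (i - 1 + int L) (Suc j') - int_binom (i - 1) (Suc j'))"
        by (subst e1, subst (2) e2, unfold ib_Suc) simp
      thus ?case using step2(2) Suc
        by (metis Suc_leD dvd_diff add_diff_cancel_left')
    qed
  qed
  thus ?case by blast
qed

theorem lemma2p2:
  fixes m :: nat and k :: int
  assumes "even m" and "m > 0"
  shows "[int_binom (int m + k) m = int_binom (int (lfun m) - 1 - k) m] (mod int m)"
proof -
  define L where "L = lfun m"
  define x where "x = int m + k - int L"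
  have neg: "int_binom (int L - 1 - k) m = int_binom x m"
    using ib_neg[of "int L - 1 - k" m] assms(1)
    by (simp add: x_def algebra_simps)
  have "int m dvd (int_binom (x + int L) m - int_binom x m)"
    using periodic[of m L x] key_dvd[OF assms(2)] unfolding L_def by auto
  hence "[int_binom (x + int L) m = int_binom x m] (mod int m)"
    by (simp add: cong_iff_dvd_diff)
  moreover have "x + int L = int m + k" by (simp add: x_def)
  ultimately show ?thesis using neg unfolding L_def by simp
qed

end
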